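(* Let $R\subset S$ be a distributive FCP ring extension with Loewy series $\{S_i\}_{i=0}^n$. Then: (1) $\pounds[R,S]=\ell[R,S]$ if and only if $[R,S]$ is a chain; in this case $[R,S]=\{S_i\}_{i=0}^n$. (2) $\pounds[R,S]=1$ if and only if $R\subset S$ is Boolean.
   Context: All rings are commutative with identity. $[R,S]$ is the lattice of $R$-subalgebras of $S$ (meet = intersection, join = product). FCP: every chain in $[R,S]$ is finite. $T\subset U$ minimal means $[T,U]=\{T,U\}$; atoms of $[R,S]$ are $T$ with $R\subset T$ minimal; the socle $\mathcal S[R,S]$ is the product of all atoms. Loewy series: $S_0=R$, $S_{i+1}=\mathcal S[S_i,S]$ while $S_i\neq S$; $\pounds[R,S]$ is the least $n$ with $S_n=S$. $\ell[R,S]$ is the supremum of lengths of chains in $[R,S]$. Distributive: $[R,S]$ is a distributive lattice; Boolean: distributive and every $T\in[R,S]$ has a complement $T'$ ($T\cap T'=R$, $TT'=S$). *)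

theory Defs
  imports Main "HOL-Library.Extended_Nat"
begin

text \<open>A ring extension R \<subseteq> S is modelled by two subrings R \<subseteq> S of an ambient
  type 'a :: comm_ring_1; R-subalgebras of S are exactly the subrings T
  with R \<subseteq> T \<subseteq> S.\<close>

definition subring :: "'a::comm_ring_1 set \<Rightarrow> bool" where
  "subring A \<longleftrightarrow> 1 \<in> A \<and> (\<forall>x\<in>A. \<forall>y\<in>A. x + y \<in> A \<and> x * y \<in> A) \<and> (\<forall>x\<in>A. - x \<in> A)"

definition interm :: "'a::comm_ring_1 set \<Rightarrow> 'a set \<Rightarrow> 'a set set" where
  "interm R S = {T. subring T \<and> R \<subseteq> T \<and> T \<subseteq> S}"

definition gen_ring :: "'a::comm_ring_1 set \<Rightarrow> 'a set" where
  "gen_ring A = \<Inter>{T. subring T \<and> A \<subseteq> T}"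

definition ring_prod :: "'a::comm_ring_1 set \<Rightarrow> 'a set \<Rightarrow> 'a set" where
  "ring_prod T U = gen_ring (T \<union> U)"

definition FCP :: "'a::comm_ring_1 set \<Rightarrow> 'a set \<Rightarrow> bool" where
  "FCP R S \<longleftrightarrow> (\<forall>C. C \<subseteq> interm R S \<and> (\<forall>T\<in>C. \<forall>U\<in>C. T \<subseteq> U \<or> U \<subseteq> T) \<longrightarrow> finite C)"

definition minimal_ext :: "'a::comm_ring_1 set \<Rightarrow> 'a set \<Rightarrow> bool" where
  "minimal_ext T U \<longleftrightarrow> T \<subset> U \<and> interm T U = {T, U}"

definition atoms :: "'a::comm_ring_1 set \<Rightarrow> 'a set \<Rightarrow> 'a set set" where
  "atoms R S = {T \<in> interm R S. minimal_ext R T}"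

definition socle :: "'a::comm_ring_1 set \<Rightarrow> 'a set \<Rightarrow> 'a set" where
  "socle R S = gen_ring (R \<union> \<Union>(atoms R S))"

primrec loewy :: "'a::comm_ring_1 set \<Rightarrow> 'a set \<Rightarrow> nat \<Rightarrow> 'a set" where
  "loewy R S 0 = R"
| "loewy R S (Suc i) = (if loewy R S i = S then S else socle (loewy R S i) S)"

definition loewy_length :: "'a::comm_ring_1 set \<Rightarrow> 'a set \<Rightarrow> nat" where
  "loewy_length R S = (LEAST n. loewy R S n = S)"

definition ext_length :: "'a::comm_ring_1 set \<Rightarrow> 'a set \<Rightarrow> enat" where
  "ext_length R S = Sup {enat (card C - 1) | C. C \<subseteq> interm R S \<and> finite C \<and> C \<noteq> {}
                          \<and> (\<forall>T\<in>C. \<forall>U\<in>C. T \<subseteq> U \<or> U \<subseteq> T)}"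

definition is_chain_ext :: "'a::comm_ring_1 set \<Rightarrow> 'a set \<Rightarrow> bool" where
  "is_chain_ext R S \<longleftrightarrow> (\<forall>T\<in>interm R S. \<forall>U\<in>interm R S. T \<subseteq> U \<or> U \<subseteq> T)"

definition distributive_ext :: "'a::comm_ring_1 set \<Rightarrow> 'a set \<Rightarrow> bool" where
  "distributive_ext R S \<longleftrightarrow>
     (\<forall>T\<in>interm R S. \<forall>U\<in>interm R S. \<forall>V\<in>interm R S.
        T \<inter> ring_prod U V = ring_prod (T \<inter> U) (T \<inter> V))"

definition boolean_ext :: "'a::comm_ring_1 set \<Rightarrow> 'a set \<Rightarrow> bool" where
  "boolean_ext R S \<longleftrightarrow> distributive_ext R S \<and>
     (\<forall>T\<in>interm R S. \<exists>T'\<in>interm R S. T \<inter> T' = R \<and> ring_prod T T' = S)"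

end

theory Submission
  imports Defs
begin

lemma subring_Inter: "(\<And>T. T \<in> F \<Longrightarrow> subring T) \<Longrightarrow> subring (\<Inter>F)"
  by (auto simp: subring_def)

lemma subring_Int: "subring A \<Longrightarrow> subring B \<Longrightarrow> subring (A \<inter> B)"
  by (auto simp: subring_def)

lemma gen_ring_subring: "subring (gen_ring A)"
  unfolding gen_ring_def by (rule subring_Inter) auto

lemma gen_ring_sup: "A \<subseteq> gen_ring A"
  unfolding gen_ring_def by auto

lemma gen_ring_least: "subring T \<Longrightarrow> A \<subseteq> T \<Longrightarrow> gen_ring A \<subseteq> T"
  unfolding gen_ring_def by auto

lemma gen_ring_id: "subring T \<Longrightarrow> gen_ring T = T"
  by (rule subset_antisym[OF gen_ring_least[OF _ order_refl] gen_ring_sup])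

lemma interm_sub: "T \<in> interm R S \<Longrightarrow> interm T S \<subseteq> interm R S"
  by (auto simp: interm_def)

lemma ring_prod_interm:
  "subring S \<Longrightarrow> T \<in> interm R S \<Longrightarrow> U \<in> interm R S \<Longrightarrow> ring_prod T U \<in> interm R S"
proof -
  assume S: "subring S" and T: "T \<in> interm R S" and U: "U \<in> interm R S"
  have "T \<union> U \<subseteq> gen_ring (T \<union> U)" by (rule gen_ring_sup)
  moreover have "gen_ring (T \<union> U) \<subseteq> S"
    by (rule gen_ring_least[OF S]) (use T U in \<open>auto simp: interm_def\<close>)
  ultimately show ?thesis using T gen_ring_subring[of "T \<union> U"]
    unfolding ring_prod_def interm_def by auto
qed

lemma ring_prod_upper1: "T \<subseteq> ring_prod T U"
  unfolding ring_prod_def using gen_ring_sup by blast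

lemma ring_prod_upper2: "U \<subseteq> ring_prod T U"
  unfolding ring_prod_def using gen_ring_sup by blast

lemma ring_prod_least: "subring V \<Longrightarrow> T \<subseteq> V \<Longrightarrow> U \<subseteq> V \<Longrightarrow> ring_prod T U \<subseteq> V"
  unfolding ring_prod_def by (simp add: gen_ring_least)

lemma ring_prod_self: "subring R \<Longrightarrow> ring_prod R R = R"
  unfolding ring_prod_def by (simp add: gen_ring_id)

lemma FCP_chain_finite:
  assumes "FCP R S" "C \<subseteq> interm R S" "\<And>T U. T \<in> C \<Longrightarrow> U \<in> C \<Longrightarrow> T \<subseteq> U \<or> U \<subseteq> T"
  shows "finite C"
  using assms unfolding FCP_def by auto

lemma FCP_seq_up:
  assumes "FCP R S" "\<And>n. g n \<in> interm R S" "\<And>n. g n \<subset> g (Suc n)"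
  shows False
proof -
  have lt: "m < k \<Longrightarrow> g m < g k" for m k by (rule lift_Suc_mono_less[of g, OF assms(3)])
  have "inj g"
  proof (rule injI)
    fix a b assume ab: "g a = g b"
    show "a = b"
    proof (rule ccontr)
      assume "a \<noteq> b"
      then have "a < b \<or> b < a" by arith
      then show False using lt[of a b] lt[of b a] ab by auto
    qed
  qed
  then have inf: "infinite (range g)"
  proof -
    assume ig: "inj g"
    show ?thesis
    proof
      assume "finite (range g)"
      then have "finite (UNIV :: nat set)" using ig by (rule finite_imageD)
      then show False by simp
    qed
  qed
  have "finite (range g)"
  proof (rule FCP_chain_finite[OF assms(1)])
    show "range g \<subseteq> interm R S" using assms(2) by (rule image_subsetI)
  next
    fix T U assume "T \<in> range g" "U \<in> range g"
    then obtain a b where ab: "T = g a" "U = g b" by blast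
    have "a < b \<or> a = b \<or> b < a" by arith
    then show "T \<subseteq> U \<or> U \<subseteq> T"
    proof (elim disjE)
      assume "a < b" then have "g a < g b" by (rule lt)
      then show ?thesis unfolding ab by (rule disjI1[OF less_imp_le])
    next
      assume "a = b" then show ?thesis unfolding ab by (intro disjI1) simp
    next
      assume "b < a" then have "g b < g a" by (rule lt)
      then show ?thesis unfolding ab by (rule disjI2[OF less_imp_le])
    qed
  qed
  with inf show False by (rule notE)
qed

lemma FCP_seq_down:
  assumes "FCP R S" "\<And>n. g n \<in> interm R S" "\<And>n. g (Suc n) \<subset> g n"
  shows False
proof -
  have lt: "m < k \<Longrightarrow> g k < g m" for m k
  proof (induction k)
    case 0 then show ?case by simp
  next
    case (Suc k)
    then show ?case using assms(3)[of k] by (metis less_Suc_eq order.strict_trans)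
  qed
  have "inj g"
  proof (rule injI)
    fix a b assume ab: "g a = g b"
    show "a = b"
    proof (rule ccontr)
      assume "a \<noteq> b"
      then have "a < b \<or> b < a" by arith
      then show False using lt[of a b] lt[of b a] ab by auto
    qed
  qed
  then have inf: "infinite (range g)"
  proof -
    assume ig: "inj g"
    show ?thesis
    proof
      assume "finite (range g)"
      then have "finite (UNIV :: nat set)" using ig by (rule finite_imageD)
      then show False by simp
    qed
  qed
  have "finite (range g)"
  proof (rule FCP_chain_finite[OF assms(1)])
    show "range g \<subseteq> interm R S" using assms(2) by (rule image_subsetI)
  next
    fix T U assume "T \<in> range g" "U \<in> range g"
    then obtain a b where ab: "T = g a" "U = g b" by blast
    have "a < b \<or> a = b \<or> b < a" by arith
    then show "T \<subseteq> U \<or> U \<subseteq> T"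
    proof (elim disjE)
      assume "a < b" then have "g b < g a" by (rule lt)
      then show ?thesis unfolding ab by (rule disjI2[OF less_imp_le])
    next
      assume "a = b" then show ?thesis unfolding ab by (intro disjI1) simp
    next
      assume "b < a" then have "g a < g b" by (rule lt)
      then show ?thesis unfolding ab by (rule disjI1[OF less_imp_le])
    qed
  qed
  with inf show False by (rule notE)
qed

lemma FCP_max:
  assumes "FCP R S" "X \<subseteq> interm R S" "x \<in> X"
  shows "\<exists>M\<in>X. \<forall>U\<in>X. M \<subseteq> U \<longrightarrow> U = M"
proof (rule ccontr)
  assume "\<not> ?thesis"
  then have ex: "\<forall>M\<in>X. \<exists>U. U \<in> X \<and> M \<subset> U" by auto
  from bchoice[OF ex] obtain f where f: "\<forall>M\<in>X. f M \<in> X \<and> M \<subset> f M" ..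
  have gX: "(f ^^ n) x \<in> X" for n
  proof (induction n)
    case 0 show ?case using assms(3) by simp
  next
    case (Suc n) then show ?case using f by simp
  qed
  show False
  proof (rule FCP_seq_up[OF assms(1), of "\<lambda>n. (f ^^ n) x"])
    show "(f ^^ n) x \<in> interm R S" for n by (rule subsetD[OF assms(2) gX])
    show "(f ^^ n) x \<subset> (f ^^ Suc n) x" for n using bspec[OF f gX[of n]] by simp
  qed
qed

lemma FCP_min:
  assumes "FCP R S" "X \<subseteq> interm R S" "x \<in> X"
  shows "\<exists>M\<in>X. \<forall>U\<in>X. U \<subseteq> M \<longrightarrow> U = M"
proof (rule ccontr)
  assume "\<not> ?thesis"
  then have ex: "\<forall>M\<in>X. \<exists>U. U \<in> X \<and> U \<subset> M" by auto
  from bchoice[OF ex] obtain f where f: "\<forall>M\<in>X. f M \<in> X \<and> f M \<subset> M" ..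
  have gX: "(f ^^ n) x \<in> X" for n
  proof (induction n)
    case 0 show ?case using assms(3) by simp
  next
    case (Suc n) then show ?case using f by simp
  qed
  show False
  proof (rule FCP_seq_down[OF assms(1), of "\<lambda>n. (f ^^ n) x"])
    show "(f ^^ n) x \<in> interm R S" for n by (rule subsetD[OF assms(2) gX])
    show "(f ^^ Suc n) x \<subset> (f ^^ n) x" for n using bspec[OF f gX[of n]] by simp
  qed
qed

lemma exist_atom:
  assumes "FCP R S" "T \<in> interm R S" "X \<in> interm T S" "T \<subset> X"
  shows "\<exists>A\<in>atoms T S. A \<subseteq> X"
proof -
  let ?Y = "{U \<in> interm T S. T \<subset> U \<and> U \<subseteq> X}"
  have "?Y \<subseteq> interm R S" using interm_sub[OF assms(2)] by auto
  from FCP_min[OF assms(1) this, of X] assms obtain M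
    where M: "M \<in> ?Y" "\<forall>U\<in>?Y. U \<subseteq> M \<longrightarrow> U = M" by auto
  have "minimal_ext T M"
    unfolding minimal_ext_def
  proof
    show "T \<subset> M" using M by auto
    show "interm T M = {T, M}"
    proof
      show "interm T M \<subseteq> {T,M}"
      proof
        fix V assume V: "V \<in> interm T M"
        show "V \<in> {T, M}"
        proof (cases "V = T")
          case False
          then have "V \<in> ?Y" using V M(1) by (auto simp: interm_def)
          then show ?thesis using M(2) V by (auto simp: interm_def)
        qed simp
      qed
      show "{T, M} \<subseteq> interm T M" using M(1) assms(2) by (auto simp: interm_def)
    qed
  qed
  then show ?thesis using M(1) by (auto simp: atoms_def)
qed

lemma socle_interm: "subring S \<Longrightarrow> T \<in> interm R S \<Longrightarrow> socle T S \<in> interm T S"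
proof -
  assume S: "subring S" and T: "T \<in> interm R S"
  have "T \<union> \<Union>(atoms T S) \<subseteq> S" using T by (auto simp: atoms_def interm_def)
  then have "gen_ring (T \<union> \<Union>(atoms T S)) \<subseteq> S" by (rule gen_ring_least[OF S])
  moreover have "T \<subseteq> gen_ring (T \<union> \<Union>(atoms T S))" using gen_ring_sup by blast
  ultimately show ?thesis using gen_ring_subring T unfolding socle_def interm_def by auto
qed

lemma atom_le_socle: "A \<in> atoms T S \<Longrightarrow> A \<subseteq> socle T S"
  unfolding socle_def by (rule subset_trans[OF _ gen_ring_sup]) (rule le_supI2, rule Union_upper)

lemma base_le_socle: "T \<subseteq> socle T S"
  unfolding socle_def by (rule subset_trans[OF _ gen_ring_sup]) (rule sup_ge1)

lemma socle_least: "subring P \<Longrightarrow> T \<subseteq> P \<Longrightarrow> (\<And>A. A \<in> atoms T S \<Longrightarrow> A \<subseteq> P) \<Longrightarrow> socle T S \<subseteq> P"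
  unfolding socle_def by (rule gen_ring_least, assumption, rule Un_least, assumption, rule Union_least)

lemma minimal_extD:
  assumes "minimal_ext T A" "B \<in> interm T A"
  shows "B = T \<or> B = A"
  using assms unfolding minimal_ext_def by auto

lemma atoms_interm: "T \<in> interm R S \<Longrightarrow> A \<in> atoms T S \<Longrightarrow> A \<in> interm R S"
  unfolding atoms_def using interm_sub by auto

lemma loewy_interm:
  assumes "subring R" "subring S" "R \<subseteq> S"
  shows "loewy R S i \<in> interm R S"
proof (induction i)
  case 0 show ?case using assms by (simp add: interm_def)
next
  case (Suc i)
  show ?case
  proof (cases "loewy R S i = S")
    case True then show ?thesis using assms by (simp add: interm_def)
  next
    case False
    have "socle (loewy R S i) S \<in> interm (loewy R S i) S" by (rule socle_interm[OF assms(2) Suc.IH])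
    then have "socle (loewy R S i) S \<in> interm R S" by (rule subsetD[OF interm_sub[OF Suc.IH]])
    then show ?thesis using False by simp
  qed
qed

lemma loewy_step: "loewy R S i \<subseteq> loewy R S (Suc i)"
  by (cases "loewy R S i = S") (simp_all add: base_le_socle)

lemma loewy_mono: "i \<le> j \<Longrightarrow> loewy R S i \<subseteq> loewy R S j"
  by (rule lift_Suc_mono_le[of "loewy R S", OF loewy_step])

lemma loewy_strict:
  assumes "subring R" "subring S" "R \<subseteq> S" "FCP R S" "loewy R S i \<noteq> S"
  shows "loewy R S i \<subset> loewy R S (Suc i)"
proof -
  let ?T = "loewy R S i"
  have T: "?T \<in> interm R S" by (rule loewy_interm[OF assms(1-3)])
  have "S \<in> interm ?T S" using T assms(2) by (simp add: interm_def)
  moreover have "?T \<subset> S" using T assms(5) by (auto simp: interm_def)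
  ultimately have "\<exists>A\<in>atoms ?T S. A \<subseteq> S" by (rule exist_atom[OF assms(4) T])
  then obtain A where A: "A \<in> atoms ?T S" "A \<subseteq> S" ..
  have "?T \<subset> A" using A(1) by (simp add: atoms_def minimal_ext_def)
  moreover have "A \<subseteq> socle ?T S" by (rule atom_le_socle[OF A(1)])
  ultimately show ?thesis using assms(5) by auto
qed

lemma loewy_ends:
  assumes "subring R" "subring S" "R \<subseteq> S" "FCP R S"
  shows "\<exists>n. loewy R S n = S"
proof (rule ccontr)
  assume "\<not> ?thesis"
  then have ne: "\<And>n. loewy R S n \<noteq> S" by auto
  show False
  proof (rule FCP_seq_up[OF assms(4)])
    show "loewy R S n \<in> interm R S" for n by (rule loewy_interm[OF assms(1-3)])
    show "loewy R S n \<subset> loewy R S (Suc n)" for n by (rule loewy_strict[OF assms(1-4) ne])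
  qed
qed

lemma loewy_len:
  assumes "subring R" "subring S" "R \<subseteq> S" "FCP R S"
  shows "loewy R S (loewy_length R S) = S"
  unfolding loewy_length_def by (rule LeastI_ex[OF loewy_ends[OF assms]])

lemma loewy_before: "i < loewy_length R S \<Longrightarrow> loewy R S i \<noteq> S"
  unfolding loewy_length_def by (rule not_less_Least)

lemma loewy_smono:
  assumes "subring R" "subring S" "R \<subseteq> S" "FCP R S"
  shows "i < j \<Longrightarrow> j \<le> loewy_length R S \<Longrightarrow> loewy R S i \<subset> loewy R S j"
proof (induction j)
  case 0 then show ?case by simp
next
  case (Suc j)
  have jl: "j < loewy_length R S" using Suc.prems by simp
  have st: "loewy R S j \<subset> loewy R S (Suc j)"
    by (rule loewy_strict[OF assms loewy_before[OF jl]])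
  show ?case
  proof (cases "i = j")
    case True then show ?thesis using st by simp
  next
    case False
    then have "i < j" using Suc.prems by simp
    then have "loewy R S i \<subset> loewy R S j" using Suc.IH jl by simp
    then show ?thesis using st by (rule order.strict_trans)
  qed
qed

lemma loewy_inj:
  assumes "subring R" "subring S" "R \<subseteq> S" "FCP R S"
  shows "inj_on (loewy R S) {0..loewy_length R S}"
proof (rule inj_onI)
  fix a b assume a: "a \<in> {0..loewy_length R S}" and b: "b \<in> {0..loewy_length R S}"
    and ab: "loewy R S a = loewy R S b"
  show "a = b"
  proof (rule ccontr)
    assume "a \<noteq> b"
    then have "a < b \<or> b < a" by arith
    then show False
    proof
      assume "a < b" then have "loewy R S a \<subset> loewy R S b" using loewy_smono[OF assms] b by simp
      then show False using ab by simp
    next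
      assume "b < a" then have "loewy R S b \<subset> loewy R S a" using loewy_smono[OF assms] a by simp
      then show False using ab by simp
    qed
  qed
qed

lemma loewy_reach:
  assumes "subring R" "subring S" "R \<subseteq> S" "FCP R S"
    and H: "\<And>i A. i < loewy_length R S \<Longrightarrow> A \<in> atoms (loewy R S i) S \<Longrightarrow> A = loewy R S (Suc i)"
    and T: "T \<in> interm R S"
  shows "\<exists>j \<le> loewy_length R S. T = loewy R S j"
proof -
  let ?n = "loewy_length R S"
  have key: "i \<le> ?n \<Longrightarrow> loewy R S i \<subseteq> T \<or> (\<exists>j<i. T = loewy R S j)" for i
  proof (induction i)
    case 0 show ?case using T by (simp add: interm_def)
  next
    case (Suc i)
    then have IH: "loewy R S i \<subseteq> T \<or> (\<exists>j<i. T = loewy R S j)" by simp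
    have ilt: "i < ?n" using Suc.prems by simp
    show ?case
    proof (cases "\<exists>j<i. T = loewy R S j")
      case True
      then obtain j where j: "j < i" "T = loewy R S j" by blast
      then have "j < Suc i" by simp
      then show ?thesis using j(2) by (intro disjI2 exI[of _ j] conjI)
    next
      case False
      have sub: "loewy R S i \<subseteq> T"
      proof (rule disjE[OF IH])
        assume "\<exists>j<i. T = loewy R S j"
        with False show ?thesis by (rule notE)
      qed
      show ?thesis
      proof (cases "T = loewy R S i")
        case True then show ?thesis by (intro disjI2 exI[of _ i]) simp
      next
        case False
        let ?L = "loewy R S i"
        have L: "?L \<in> interm R S" by (rule loewy_interm[OF assms(1-3)])
        have "T \<in> interm ?L S" using T sub by (simp add: interm_def)
        moreover have "?L \<subset> T" using sub False by auto
        ultimately have "\<exists>A\<in>atoms ?L S. A \<subseteq> T" by (rule exist_atom[OF assms(4) L])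
        then obtain A where A: "A \<in> atoms ?L S" "A \<subseteq> T" ..
        have "A = loewy R S (Suc i)" by (rule H[OF ilt A(1)])
        then show ?thesis using A(2) by simp
      qed
    qed
  qed
  from key[OF order_refl] show ?thesis
  proof
    assume "loewy R S ?n \<subseteq> T"
    then have "T = loewy R S ?n" using T loewy_len[OF assms(1-4)] by (auto simp: interm_def)
    then show ?thesis by (intro exI[of _ ?n]) simp
  next
    assume "\<exists>j<?n. T = loewy R S j"
    then obtain j where "j < ?n" "T = loewy R S j" by blast
    then show ?thesis by (intro exI[of _ j]) simp
  qed
qed

lemma chain_H:
  assumes "subring R" "subring S" "R \<subseteq> S" "FCP R S"
    and ch: "is_chain_ext R S" and i: "i < loewy_length R S" and A: "A \<in> atoms (loewy R S i) S"
  shows "A = loewy R S (Suc i)"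
proof -
  let ?L = "loewy R S i"
  have L: "?L \<in> interm R S" by (rule loewy_interm[OF assms(1-3)])
  have ne: "?L \<noteq> S" by (rule loewy_before[OF i])
  have AI: "A \<in> interm R S" by (rule atoms_interm[OF L A])
  have uniq: "B = A" if B: "B \<in> atoms ?L S" for B
  proof -
    have BI: "B \<in> interm R S" by (rule atoms_interm[OF L B])
    have "A \<subseteq> B \<or> B \<subseteq> A" using ch AI BI unfolding is_chain_ext_def by auto
    then show ?thesis
    proof
      assume "A \<subseteq> B"
      have mB: "minimal_ext ?L B" and LB: "?L \<subset> B" using B by (auto simp: atoms_def minimal_ext_def)
      have "A \<in> interm ?L B" using A \<open>A \<subseteq> B\<close> by (auto simp: atoms_def interm_def)
      then have "A = ?L \<or> A = B" by (rule minimal_extD[OF mB])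
      moreover have "A \<noteq> ?L" using A by (auto simp: atoms_def minimal_ext_def)
      ultimately show ?thesis by simp
    next
      assume "B \<subseteq> A"
      have mA: "minimal_ext ?L A" using A by (auto simp: atoms_def)
      have "B \<in> interm ?L A" using B \<open>B \<subseteq> A\<close> by (auto simp: atoms_def interm_def)
      then have "B = ?L \<or> B = A" by (rule minimal_extD[OF mA])
      moreover have "B \<noteq> ?L" using B by (auto simp: atoms_def minimal_ext_def)
      ultimately show ?thesis by simp
    qed
  qed
  have "socle ?L S \<subseteq> A"
  proof (rule socle_least)
    show "subring A" "?L \<subseteq> A" using A by (auto simp: atoms_def interm_def)
    show "B \<subseteq> A" if "B \<in> atoms ?L S" for B using uniq[OF that] by simp
  qed
  moreover have "A \<subseteq> socle ?L S" by (rule atom_le_socle[OF A])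
  ultimately have "socle ?L S = A" by (rule subset_antisym)
  then show ?thesis using ne by simp
qed

lemma chain_image:
  assumes "subring R" "subring S" "R \<subseteq> S" "FCP R S" "is_chain_ext R S"
  shows "interm R S = loewy R S ` {0..loewy_length R S}"
proof
  show "interm R S \<subseteq> loewy R S ` {0..loewy_length R S}"
  proof
    fix T assume T: "T \<in> interm R S"
    have "\<exists>j \<le> loewy_length R S. T = loewy R S j"
      by (rule loewy_reach[OF assms(1-4) chain_H[OF assms] T])
    then obtain j where "j \<le> loewy_length R S" "T = loewy R S j" by blast
    then show "T \<in> loewy R S ` {0..loewy_length R S}" by simp
  qed
  show "loewy R S ` {0..loewy_length R S} \<subseteq> interm R S"
    using loewy_interm[OF assms(1-3)] by auto
qed

lemma card_loewy:
  assumes "subring R" "subring S" "R \<subseteq> S" "FCP R S"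
  shows "card (loewy R S ` {0..loewy_length R S}) = Suc (loewy_length R S)"
  using card_image[OF loewy_inj[OF assms]] by simp

lemma chain_length:
  assumes "subring R" "subring S" "R \<subseteq> S" "FCP R S" "is_chain_ext R S"
  shows "enat (loewy_length R S) = ext_length R S"
proof -
  let ?n = "loewy_length R S"
  let ?E = "{enat (card C - 1) | C. C \<subseteq> interm R S \<and> finite C \<and> C \<noteq> {}
                          \<and> (\<forall>T\<in>C. \<forall>U\<in>C. T \<subseteq> U \<or> U \<subseteq> T)}"
  have eq: "interm R S = loewy R S ` {0..?n}" by (rule chain_image[OF assms])
  have cI: "card (interm R S) = Suc ?n" unfolding eq by (rule card_loewy[OF assms(1-4)])
  have fI: "finite (interm R S)" unfolding eq by simp
  have up: "y \<le> enat ?n" if "y \<in> ?E" for y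
  proof -
    from that obtain C where C: "y = enat (card C - 1)" "C \<subseteq> interm R S" by blast
    have "card C \<le> card (interm R S)" by (rule card_mono[OF fI C(2)])
    then show ?thesis using C(1) cI by simp
  qed
  have RI: "R \<in> interm R S" using assms(1,3) by (simp add: interm_def)
  have mem: "enat ?n \<in> ?E"
  proof -
    have "interm R S \<subseteq> interm R S \<and> finite (interm R S) \<and> interm R S \<noteq> {}
          \<and> (\<forall>T\<in>interm R S. \<forall>U\<in>interm R S. T \<subseteq> U \<or> U \<subseteq> T)"
      using fI RI assms(5) unfolding is_chain_ext_def by auto
    moreover have "enat ?n = enat (card (interm R S) - 1)" using cI by simp
    ultimately show ?thesis by blast
  qed
  have "Sup ?E = enat ?n"
    by (rule antisym[OF Sup_least[OF up] Sup_upper[OF mem]])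
  then show ?thesis unfolding ext_length_def by simp
qed

lemma length_chain:
  assumes "subring R" "subring S" "R \<subseteq> S" "FCP R S"
    and len: "enat (loewy_length R S) = ext_length R S"
  shows "is_chain_ext R S"
proof -
  let ?n = "loewy_length R S"
  let ?E = "{enat (card C - 1) | C. C \<subseteq> interm R S \<and> finite C \<and> C \<noteq> {}
                          \<and> (\<forall>T\<in>C. \<forall>U\<in>C. T \<subseteq> U \<or> U \<subseteq> T)}"
  have H: "A = loewy R S (Suc i)" if i: "i < ?n" and A: "A \<in> atoms (loewy R S i) S" for i A
  proof (rule ccontr)
    assume neq: "A \<noteq> loewy R S (Suc i)"
    let ?L = "loewy R S i"
    have L: "?L \<in> interm R S" by (rule loewy_interm[OF assms(1-3)])
    have ne: "?L \<noteq> S" by (rule loewy_before[OF i])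
    have LA: "?L \<subset> A" using A by (simp add: atoms_def minimal_ext_def)
    have "A \<subseteq> socle ?L S" by (rule atom_le_socle[OF A])
    then have AS: "A \<subset> loewy R S (Suc i)" using ne neq by auto
    let ?C = "insert A (loewy R S ` {0..?n})"
    have notin: "A \<notin> loewy R S ` {0..?n}"
    proof
      assume "A \<in> loewy R S ` {0..?n}"
      then obtain j where j: "A = loewy R S j" by blast
      show False
      proof (cases "j \<le> i")
        case True
        then have "loewy R S j \<subseteq> ?L" by (rule loewy_mono)
        then show False using LA j by auto
      next
        case False
        then have "loewy R S (Suc i) \<subseteq> loewy R S j" by (intro loewy_mono) simp
        then show False using AS j by auto
      qed
    qed
    have cC: "card ?C = Suc (Suc ?n)"
      using card_insert_disjoint[OF _ notin] card_loewy[OF assms(1-4)] by simp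
    have sub: "?C \<subseteq> interm R S"
      using atoms_interm[OF L A] loewy_interm[OF assms(1-3)] by auto
    have cmpL: "loewy R S j \<subseteq> loewy R S k \<or> loewy R S k \<subseteq> loewy R S j" for j k
    proof (cases "j \<le> k")
      case True show ?thesis by (rule disjI1[OF loewy_mono[OF True]])
    next
      case False then have "k \<le> j" by simp
      show ?thesis by (rule disjI2[OF loewy_mono[OF \<open>k \<le> j\<close>]])
    qed
    have cmpA: "A \<subseteq> loewy R S j \<or> loewy R S j \<subseteq> A" for j
    proof (cases "j \<le> i")
      case True
      then have "loewy R S j \<subseteq> ?L" by (rule loewy_mono)
      then show ?thesis using LA by auto
    next
      case False
      then have "loewy R S (Suc i) \<subseteq> loewy R S j" by (intro loewy_mono) simp
      then show ?thesis using AS by auto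
    qed
    have ch: "\<forall>T\<in>?C. \<forall>U\<in>?C. T \<subseteq> U \<or> U \<subseteq> T"
    proof (intro ballI)
      fix T U assume T: "T \<in> ?C" and U: "U \<in> ?C"
      show "T \<subseteq> U \<or> U \<subseteq> T"
      proof (cases "T = A")
        case TA: True
        show ?thesis
        proof (cases "U = A")
          case True then show ?thesis using TA by simp
        next
          case False then obtain k where "U = loewy R S k" using U by auto
          then show ?thesis using TA cmpA[of k] by simp
        qed
      next
        case TA: False then obtain j where j: "T = loewy R S j" using T by auto
        show ?thesis
        proof (cases "U = A")
          case True then show ?thesis using j cmpA[of j] by auto
        next
          case False then obtain k where "U = loewy R S k" using U by auto
          then show ?thesis using j cmpL[of j k] by simp
        qed
      qed
    qed
    have "enat (card ?C - 1) \<in> ?E"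
      using sub ch by blast
    then have "enat (card ?C - 1) \<le> Sup ?E" by (rule Sup_upper)
    also have "Sup ?E = enat ?n" using len unfolding ext_length_def by simp
    finally show False using cC by simp
  qed
  show ?thesis
    unfolding is_chain_ext_def
  proof (intro ballI)
    fix T U assume T: "T \<in> interm R S" and U: "U \<in> interm R S"
    obtain j where j: "T = loewy R S j" using loewy_reach[OF assms(1-4) H T] by blast
    obtain k where k: "U = loewy R S k" using loewy_reach[OF assms(1-4) H U] by blast
    show "T \<subseteq> U \<or> U \<subseteq> T"
    proof (cases "j \<le> k")
      case True then show ?thesis using loewy_mono[OF True, of R S] j k by simp
    next
      case False then have "k \<le> j" by simp
      then show ?thesis using loewy_mono[OF \<open>k \<le> j\<close>, of R S] j k by simp
    qed
  qed
qed

lemma len_one_iff: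
  assumes "subring R" "subring S" "R \<subseteq> S" "FCP R S" "R \<noteq> S"
  shows "loewy_length R S = 1 \<longleftrightarrow> socle R S = S"
proof
  have l1: "loewy R S 1 = socle R S" using assms(5) by simp
  assume "loewy_length R S = 1"
  then show "socle R S = S" using loewy_len[OF assms(1-4)] l1 by simp
next
  have l1: "loewy R S 1 = socle R S" using assms(5) by simp
  assume so: "socle R S = S"
  have "loewy R S 1 = S" using l1 so by simp
  then have le: "loewy_length R S \<le> 1" unfolding loewy_length_def by (rule Least_le)
  have "loewy_length R S \<noteq> 0"
  proof
    assume "loewy_length R S = 0"
    then have "loewy R S 0 = S" using loewy_len[OF assms(1-4)] by simp
    then show False using assms(5) by simp
  qed
  then show "loewy_length R S = 1" using le by simp
qed

lemma boolean_socle: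
  assumes "subring R" "subring S" "R \<subseteq> S" "FCP R S" "boolean_ext R S"
  shows "socle R S = S"
proof (rule ccontr)
  assume ne: "socle R S \<noteq> S"
  let ?A = "socle R S"
  have RI: "R \<in> interm R S" using assms(1,3) by (simp add: interm_def)
  have AI0: "?A \<in> interm R S" by (rule socle_interm[OF assms(2) RI])
  have "\<exists>T'\<in>interm R S. ?A \<inter> T' = R \<and> ring_prod ?A T' = S"
    using assms(5) AI0 unfolding boolean_ext_def by simp
  then obtain A' where A'1: "A' \<in> interm R S" and A'2: "?A \<inter> A' = R \<and> ring_prod ?A A' = S" ..
  have "A' \<noteq> R"
  proof
    assume "A' = R"
    have "ring_prod ?A A' \<subseteq> ?A"
      by (rule ring_prod_least) (use AI0 \<open>A' = R\<close> base_le_socle[of R S] in \<open>auto simp: interm_def\<close>)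
    then have "S \<subseteq> ?A" using A'2 by simp
    then show False using ne AI0 by (auto simp: interm_def)
  qed
  then have "R \<subset> A'" using A'1 by (auto simp: interm_def)
  then have "\<exists>B\<in>atoms R S. B \<subseteq> A'" by (rule exist_atom[OF assms(4) RI A'1])
  then obtain B where B: "B \<in> atoms R S" "B \<subseteq> A'" ..
  have "B \<subseteq> ?A" by (rule atom_le_socle[OF B(1)])
  then have "B \<subseteq> R" using B(2) A'2 by auto
  moreover have "R \<subset> B" using B(1) by (simp add: atoms_def minimal_ext_def)
  ultimately show False by auto
qed

lemma socle_boolean:
  assumes "subring R" "subring S" "R \<subseteq> S" "FCP R S" "distributive_ext R S" "socle R S = S"
  shows "boolean_ext R S"
  unfolding boolean_ext_def
proof (intro conjI ballI)
  show "distributive_ext R S" by fact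
  have RI: "R \<in> interm R S" using assms(1,3) by (simp add: interm_def)
  have d: "\<forall>T\<in>interm R S. \<forall>U\<in>interm R S. \<forall>V\<in>interm R S.
        T \<inter> ring_prod U V = ring_prod (T \<inter> U) (T \<inter> V)"
    using assms(5) unfolding distributive_ext_def .
  fix T assume T: "T \<in> interm R S"
  let ?X = "{U \<in> interm R S. T \<inter> U = R}"
  have RX: "R \<in> ?X" using T RI by (auto simp: interm_def)
  have "\<exists>M\<in>?X. \<forall>V\<in>?X. M \<subseteq> V \<longrightarrow> V = M" by (rule FCP_max[OF assms(4) _ RX]) auto
  then obtain U where U: "U \<in> ?X" and Umax: "\<forall>V\<in>?X. U \<subseteq> V \<longrightarrow> V = U" ..
  have UI: "U \<in> interm R S" and TU: "T \<inter> U = R" using U by auto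
  let ?P = "ring_prod T U"
  have PI: "?P \<in> interm R S" by (rule ring_prod_interm[OF assms(2) T UI])
  have "S \<subseteq> ?P"
  proof (rule ccontr)
    assume nS: "\<not> S \<subseteq> ?P"
    have "\<not> (\<forall>A\<in>atoms R S. A \<subseteq> ?P)"
    proof
      assume all: "\<forall>A\<in>atoms R S. A \<subseteq> ?P"
      have "socle R S \<subseteq> ?P"
        by (rule socle_least) (use PI all in \<open>auto simp: interm_def\<close>)
      then show False using nS assms(6) by simp
    qed
    then obtain A where A: "A \<in> atoms R S" "\<not> A \<subseteq> ?P" by auto
    have AI: "A \<in> interm R S" by (rule atoms_interm[OF RI A(1)])
    have nAT: "\<not> A \<subseteq> T"
    proof
      assume "A \<subseteq> T"
      then have "A \<subseteq> ?P" using ring_prod_upper1[of T U] by (rule subset_trans)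
      then show False using A(2) by simp
    qed
    have nAU: "\<not> A \<subseteq> U"
    proof
      assume "A \<subseteq> U"
      then have "A \<subseteq> ?P" using ring_prod_upper2[of U T] by (rule subset_trans)
      then show False using A(2) by simp
    qed
    have mA: "minimal_ext R A" using A(1) by (simp add: atoms_def)
    have "T \<inter> A \<in> interm R A"
      using T AI subring_Int[of T A] by (auto simp: interm_def)
    then have "T \<inter> A = R \<or> T \<inter> A = A" by (rule minimal_extD[OF mA])
    then have TA: "T \<inter> A = R" using nAT by auto
    let ?V = "ring_prod U A"
    have VI: "?V \<in> interm R S" by (rule ring_prod_interm[OF assms(2) UI AI])
    have "T \<inter> ?V = ring_prod (T \<inter> U) (T \<inter> A)" using d[rule_format, OF T UI AI] .
    also have "\<dots> = R" using TU TA ring_prod_self[OF assms(1)] by simp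
    finally have "?V \<in> ?X" using VI by simp
    moreover have "U \<subseteq> ?V" by (rule ring_prod_upper1)
    ultimately have "?V = U" using Umax by simp
    moreover have "A \<subseteq> ?V" by (rule ring_prod_upper2)
    ultimately show False using nAU by simp
  qed
  then have PS: "?P = S" using PI by (auto simp: interm_def)
  show "\<exists>T'\<in>interm R S. T \<inter> T' = R \<and> ring_prod T T' = S"
  proof (rule bexI[of _ U])
    show "T \<inter> U = R \<and> ring_prod T U = S" using TU PS by simp
    show "U \<in> interm R S" by (rule UI)
  qed
qed

theorem corollary8p31:
  fixes R S :: "'a::comm_ring_1 set"
  assumes "subring R" and "subring S" and "R \<subset> S"
    and "FCP R S" and "distributive_ext R S"
  shows "(enat (loewy_length R S) = ext_length R S \<longleftrightarrow> is_chain_ext R S)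
         \<and> (is_chain_ext R S \<longrightarrow> interm R S = loewy R S ` {0..loewy_length R S})
         \<and> (loewy_length R S = 1 \<longleftrightarrow> boolean_ext R S)"
proof (intro conjI impI)
  have RS: "R \<subseteq> S" and ne: "R \<noteq> S" using assms(3) by auto
  note A4 = assms(1) assms(2) RS assms(4)
  show "enat (loewy_length R S) = ext_length R S \<longleftrightarrow> is_chain_ext R S"
  proof
    assume "enat (loewy_length R S) = ext_length R S"
    then show "is_chain_ext R S" by (rule length_chain[OF A4])
  next
    assume "is_chain_ext R S"
    then show "enat (loewy_length R S) = ext_length R S" by (rule chain_length[OF A4])
  qed
  show "interm R S = loewy R S ` {0..loewy_length R S}" if "is_chain_ext R S"
    by (rule chain_image[OF A4 that])
  show "loewy_length R S = 1 \<longleftrightarrow> boolean_ext R S"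
  proof -
    have "loewy_length R S = 1 \<longleftrightarrow> socle R S = S" by (rule len_one_iff[OF A4 ne])
    also have "\<dots> \<longleftrightarrow> boolean_ext R S"
      using boolean_socle[OF A4] socle_boolean[OF A4 assms(5)] by blast
    finally show ?thesis .
  qed
qed

end
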